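(* Let $A\in\mathbb{R}^{l\times m}$ and $B\in\mathbb{R}^{n\times m}$, and consider the parametrized system $A\,(c\circ x^B)=0$ with parameters $c\in\mathbb{R}^m_{>0}$. Assume $\ker A\cap\mathbb{R}^m_{>0}\neq\emptyset$, $\dim P=1$ and $d=1$. Then the following are equivalent: (1) $|Y_c|\ge1$ for all $c\in\mathbb{R}^m_{>0}$; (2) $\tilde b_1\cdot\tilde b_\omega<0$.
   Context: Notation: for $x\in\mathbb{R}^n_{>0}$ and $y\in\mathbb{R}^n$, $x^y=\prod_{i=1}^n x_i^{y_i}$; for a matrix $B=(b^1,\dots,b^m)\in\mathbb{R}^{n\times m}$, $x^B\in\mathbb{R}^m_{>0}$ is the vector with entries $x^{b^j}$; $\circ$ denotes the componentwise product, and $(\cdot)^{-1}$ applied to a positive vector is componentwise. $1_m\in\mathbb{R}^m$ is the all-ones vector. (One class setting.) The coefficient polytope is $P=\{y\in\ker A\cap\mathbb{R}^m_{>0} : 1_m\cdot y=1\}$. The monomial dependency subspace is $D=\ker\begin{pmatrix}B\\ 1_m^{\mathsf T}\end{pmatrix}\subseteq\mathbb{R}^m$ and the monomial dependency is $d=\dim D$. The solution set on the coefficient polytope is $Y_c=\{y\in P : y^z=c^z \text{ for all } z\in D\}$. When $\dim P=1$, the closure $\overline P=\{y\in\ker A\cap\mathbb{R}^m_{\ge0}: 1_m\cdot y=1\}$ is a line segment with two endpoints $y^1,y^2$; set $q=(y^1-y^2)\circ(y^1+y^2)^{-1}\in\mathbb{R}^m$, and assume (after reordering the indices $\{1,\dots,m\}$)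 that $1=q_1\ge q_2\ge\cdots\ge q_m=-1$. Let $I_1,\dots,I_\omega\subseteq\{1,\dots,m\}$ be the $\omega$ equivalence classes of indices with equal (consecutive) components of $q$, ordered so that the common value $\tilde q_i$ of $q$ on $I_i$ is strictly decreasing in $i$. When $d=1$, let $b\in\mathbb{R}^m$ span $D$, and define the lumped vector $\tilde b\in\mathbb{R}^\omega$ by $\tilde b_i=\sum_{i'\in I_i}b_{i'}$. *)

theory Defs
  imports "HOL-Analysis.Analysis"
begin

definition pos_vec :: "real^'m \<Rightarrow> bool" where
  "pos_vec y \<longleftrightarrow> (\<forall>i. 0 < y $ i)"

definition coeff_polytope :: "real^'m^'l \<Rightarrow> (real^'m) set" where
  "coeff_polytope A = {y. A *v y = 0 \<and> (\<forall>i. 0 < y $ i) \<and> (\<Sum>i\<in>UNIV. y $ i) = 1}"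

definition coeff_polytope_closure :: "real^'m^'l \<Rightarrow> (real^'m) set" where
  "coeff_polytope_closure A = {y. A *v y = 0 \<and> (\<forall>i. 0 \<le> y $ i) \<and> (\<Sum>i\<in>UNIV. y $ i) = 1}"

definition mon_dep_space :: "real^'m^'n \<Rightarrow> (real^'m) set" where
  "mon_dep_space B = {z. B *v z = 0 \<and> (\<Sum>i\<in>UNIV. z $ i) = 0}"

definition vpow :: "real^'m \<Rightarrow> real^'m \<Rightarrow> real" where
  "vpow y z = (\<Prod>i\<in>UNIV. (y $ i) powr (z $ i))"

definition sol_set :: "real^'m^'l \<Rightarrow> real^'m^'n \<Rightarrow> real^'m \<Rightarrow> (real^'m) set" where
  "sol_set A B c = {y \<in> coeff_polytope A. \<forall>z \<in> mon_dep_space B. vpow y z = vpow c z}"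

definition qvec :: "real^'m \<Rightarrow> real^'m \<Rightarrow> real^'m" where
  "qvec y1 y2 = (\<chi> i. (y1 $ i - y2 $ i) / (y1 $ i + y2 $ i))"

definition lumped_first :: "real^'m \<Rightarrow> real^'m \<Rightarrow> real" where
  "lumped_first b q = (\<Sum>i\<in>{i. q $ i = Max (range (\<lambda>j. q $ j))}. b $ i)"

definition lumped_last :: "real^'m \<Rightarrow> real^'m \<Rightarrow> real" where
  "lumped_last b q = (\<Sum>i\<in>{i. q $ i = Min (range (\<lambda>j. q $ j))}. b $ i)"

end

theory Submission
  imports Defs
begin

lemma end_lemma:
  fixes L C r :: real and G :: "real \<Rightarrow> real"
  assumes L: "L > 0" and G: "\<And>t. 0 < t \<Longrightarrow> t \<le> 1/2 \<Longrightarrow> G t \<le> C"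
  shows "\<exists>t. 0 < t \<and> t \<le> 1/2 \<and> L * ln t + G t < r"
proof -
  define t where "t = min (1/2) (exp ((r - C - 1)/L))"
  have t0: "0 < t" "t \<le> 1/2" by (auto simp: t_def)
  have "ln t \<le> ln (exp ((r - C - 1)/L))"
    using t0 by (subst ln_le_cancel_iff) (auto simp: t_def)
  hence "ln t \<le> (r - C - 1)/L" by simp
  hence "L * ln t \<le> L * ((r - C - 1)/L)" using L by (intro mult_left_mono) auto
  hence "L * ln t \<le> r - C - 1" using L by simp
  thus ?thesis using t0 G[OF t0] by (intro exI[of _ t]) auto
qed

lemma ln_half_bound: "0 \<le> (t::real) \<Longrightarrow> t \<le> 1/2 \<Longrightarrow> -1 \<le> ln (1 - t)"
proof -
  assume a: "0 \<le> t" "t \<le> 1/2"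
  have "- t - 2 * t\<^sup>2 \<le> ln (1 - t)" using ln_one_minus_pos_lower_bound a by blast
  moreover have "t * t \<le> (1/2) * (1/2)" using a by (intro mult_mono) auto
  hence "t\<^sup>2 \<le> 1/4" by (simp add: power2_eq_square)
  ultimately show ?thesis using a by linarith
qed

lemma bound_K:
  fixes K :: "real \<Rightarrow> real"
  assumes "continuous_on {0..1} K"
  obtains M where "\<And>t. t \<in> {0..1} \<Longrightarrow> \<bar>K t\<bar> \<le> M"
proof -
  have "bounded (K ` {0..1})"
    by (rule compact_imp_bounded[OF compact_continuous_image[OF assms compact_Icc]])
  then obtain M where "\<forall>x\<in>K ` {0..1}. norm x \<le> M" by (auto simp: bounded_iff)
  thus ?thesis by (intro that[of M]) auto
qed

lemma surj_pos:
  fixes L F :: real and K :: "real \<Rightarrow> real"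
  assumes K: "continuous_on {0..1} K" and L: "L > 0" and F: "F < 0"
  shows "\<exists>t. 0 < t \<and> t < 1 \<and> L * ln t + F * ln (1 - t) + K t = r"
proof -
  obtain M where M: "\<And>t. t \<in> {0..1} \<Longrightarrow> \<bar>K t\<bar> \<le> M" using bound_K[OF K] by blast
  define h where "h t = L * ln t + F * ln (1 - t) + K t" for t
  have "\<exists>t. 0 < t \<and> t \<le> 1/2 \<and> L * ln t + (F * ln (1 - t) + K t) < r"
  proof (rule end_lemma[OF L])
    fix t :: real assume t: "0 < t" "t \<le> 1/2"
    have "-1 \<le> ln (1 - t)" using ln_half_bound t by auto
    hence "F * ln (1 - t) \<le> F * (-1)" using F by (intro mult_left_mono_neg) auto
    moreover have "K t \<le> M" using M[of t] t by auto
    ultimately show "F * ln (1 - t) + K t \<le> -F + M" by linarith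
  qed
  then obtain t1 where t1: "0 < t1" "t1 \<le> 1/2" "h t1 < r" by (auto simp: h_def algebra_simps)
  have "\<exists>s. 0 < s \<and> s \<le> 1/2 \<and> (-F) * ln s + (- (L * ln (1 - s)) - K (1 - s)) < -r"
  proof (rule end_lemma)
    show "-F > 0" using F by simp
    fix s :: real assume s: "0 < s" "s \<le> 1/2"
    have "-1 \<le> ln (1 - s)" using ln_half_bound s by auto
    hence "L * (-1) \<le> L * ln (1 - s)" using L by (intro mult_left_mono) auto
    moreover have "- K (1 - s) \<le> M" using M[of "1 - s"] s by auto
    ultimately show "- (L * ln (1 - s)) - K (1 - s) \<le> L + M" by linarith
  qed
  then obtain s where s: "0 < s" "s \<le> 1/2" "(-F) * ln s + (- (L * ln (1 - s)) - K (1 - s)) < -r"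
    by blast
  define t2 where "t2 = 1 - s"
  have t2: "1/2 \<le> t2" "t2 < 1" "r < h t2" using s by (auto simp: t2_def h_def)
  have sub: "{t1..t2} \<subseteq> {0..1}" using t1 t2 by auto
  have cont: "continuous_on {t1..t2} h" unfolding h_def
    using t1 t2 by (intro continuous_intros continuous_on_subset[OF K sub]) auto
  obtain x where "x \<ge> t1" "x \<le> t2" "h x = r"
    using IVT'[of h t1 r t2, OF _ _ _ cont] t1 t2 by fastforce
  thus ?thesis using t1 t2 by (intro exI[of _ x]) (auto simp: h_def)
qed

lemma surj_iff:
  fixes L F :: real and K :: "real \<Rightarrow> real"
  assumes K: "continuous_on {0..1} K"
  shows "(\<forall>r. \<exists>t. 0 < t \<and> t < 1 \<and> L * ln t + F * ln (1 - t) + K t = r) \<longleftrightarrow> L * F < 0"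
proof
  assume "L * F < 0"
  hence "L > 0 \<and> F < 0 \<or> L < 0 \<and> F > 0" by (auto simp: mult_less_0_iff)
  thus "\<forall>r. \<exists>t. 0 < t \<and> t < 1 \<and> L * ln t + F * ln (1 - t) + K t = r"
  proof
    assume "L > 0 \<and> F < 0" thus ?thesis using surj_pos[OF K] by blast
  next
    assume a: "L < 0 \<and> F > 0"
    have K': "continuous_on {0..1} (\<lambda>t. - K t)" using K by (intro continuous_intros)
    show ?thesis
    proof
      fix r
      obtain t where "0 < t \<and> t < 1 \<and> (-L) * ln t + (-F) * ln (1 - t) + (- K t) = -r"
        using surj_pos[OF K', of "-L" "-F" "-r"] a by auto
      thus "\<exists>t. 0 < t \<and> t < 1 \<and> L * ln t + F * ln (1 - t) + K t = r" by (intro exI[of _ t]) auto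
    qed
  qed
next
  assume S: "\<forall>r. \<exists>t. 0 < t \<and> t < 1 \<and> L * ln t + F * ln (1 - t) + K t = r"
  obtain M where M: "\<And>t. t \<in> {0..1} \<Longrightarrow> \<bar>K t\<bar> \<le> M" using bound_K[OF K] by blast
  show "L * F < 0"
  proof (rule ccontr)
    assume "\<not> L * F < 0"
    hence "0 \<le> L * F" by simp
    hence c: "0 \<le> L \<and> 0 \<le> F \<or> L \<le> 0 \<and> F \<le> 0" by (auto simp: zero_le_mult_iff)
    from c show False
    proof
      assume a: "0 \<le> L \<and> 0 \<le> F"
      obtain t where t: "0 < t" "t < 1" "L * ln t + F * ln (1 - t) + K t = M + 1" using S by blast
      have "L * ln t \<le> 0" using a t by (intro mult_nonneg_nonpos) auto
      moreover have "F * ln (1 - t) \<le> 0" using a t by (intro mult_nonneg_nonpos) auto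
      moreover have "K t \<le> M" using M[of t] t by auto
      ultimately show False using t by linarith
    next
      assume a: "L \<le> 0 \<and> F \<le> 0"
      obtain t where t: "0 < t" "t < 1" "L * ln t + F * ln (1 - t) + K t = - M - 1" using S by blast
      have "0 \<le> L * ln t" using a t by (intro mult_nonpos_nonpos) auto
      moreover have "0 \<le> F * ln (1 - t)" using a t by (intro mult_nonpos_nonpos) auto
      moreover have "- M \<le> K t" using M[of t] t by auto
      ultimately show False using t by linarith
    qed
  qed
qed

lemma pos_comb:
  fixes a b t :: real
  assumes "0 \<le> a" "0 \<le> b" "0 < a + b" "0 < t" "t < 1"
  shows "0 < (1 - t) * a + t * b"
proof (cases "a > 0")
  case True
  hence "0 < (1 - t) * a" using assms by simp
  moreover have "0 \<le> t * b" using assms by simp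
  ultimately show ?thesis by linarith
next
  case False
  hence "a = 0" "b > 0" using assms by auto
  thus ?thesis using assms by simp
qed

lemma pos_comb2:
  fixes a b t :: real
  assumes "0 < a" "0 < b" "0 \<le> t" "t \<le> 1"
  shows "0 < (1 - t) * a + t * b"
proof (cases "t = 0")
  case True thus ?thesis using assms by simp
next
  case False
  hence "0 < t * b" using assms by simp
  moreover have "0 \<le> (1 - t) * a" using assms by simp
  ultimately show ?thesis by linarith
qed

lemma zero_entry:
  fixes A :: "real^'m^'l" and y1 y2 :: "real^'m"
  assumes C: "coeff_polytope_closure A = closed_segment y1 y2" and ne: "y1 \<noteq> y2"
  shows "\<exists>i. y1$i = 0"
proof (rule ccontr)
  assume nz: "\<not> ?thesis"
  have c1: "y1 \<in> coeff_polytope_closure A" and c2: "y2 \<in> coeff_polytope_closure A"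
    using C by auto
  have A1: "A *v y1 = 0" "\<And>i. 0 \<le> y1$i" "(\<Sum>i\<in>UNIV. y1$i) = 1"
    using c1 by (auto simp: coeff_polytope_closure_def)
  have A2: "A *v y2 = 0" "\<And>i. 0 \<le> y2$i" "(\<Sum>i\<in>UNIV. y2$i) = 1"
    using c2 by (auto simp: coeff_polytope_closure_def)
  have pos: "\<And>i. 0 < y1$i" using nz A1(2) by (metis less_eq_real_def)
  define s where "s = Min (range (\<lambda>i. y1$i))"
  have "s \<in> range (\<lambda>i. y1$i)" unfolding s_def by (rule Min_in) auto
  hence s_pos: "0 < s" using pos by auto
  have s_le: "\<And>i. s \<le> y1$i" unfolding s_def by (rule Min_le) auto
  have y2le: "\<And>i. y2$i \<le> 1"
  proof -
    fix i
    have "y2$i \<le> (\<Sum>j\<in>UNIV. y2$j)" by (rule member_le_sum) (auto simp: A2(2))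
    thus "y2$i \<le> 1" using A2(3) by simp
  qed
  define w where "w = y1 + s *\<^sub>R (y1 - y2)"
  have "w \<in> coeff_polytope_closure A"
  proof -
    have "A *v w = 0" using A1(1) A2(1)
      by (simp add: w_def matrix_vector_right_distrib matrix_vector_mult_scaleR matrix_vector_mult_diff_distrib)
    moreover have "0 \<le> w$i" for i
    proof -
      have "s * y2$i \<le> s * 1" using s_pos y2le[of i] by (intro mult_left_mono) auto
      moreover have "0 \<le> s * y1$i" using s_pos A1(2)[of i] by simp
      ultimately show ?thesis using s_le[of i] by (simp add: w_def algebra_simps)
    qed
    moreover have "(\<Sum>i\<in>UNIV. w$i) = 1"
      using A1(3) A2(3)
      by (simp add: w_def sum.distrib sum_subtractf algebra_simps sum_distrib_left[symmetric])
    ultimately show ?thesis by (simp add: coeff_polytope_closure_def)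
  qed
  hence "w \<in> closed_segment y1 y2" using C by simp
  then obtain u where u: "0 \<le> u" "u \<le> 1" "w = (1 - u) *\<^sub>R y1 + u *\<^sub>R y2"
    by (auto simp: closed_segment_def)
  have "y1$i = y2$i" for i
  proof -
    have "y1$i + s * (y1$i - y2$i) = (1 - u) * y1$i + u * y2$i"
      using arg_cong[OF u(3), of "\<lambda>v. v$i"] by (simp add: w_def)
    hence "(s + u) * (y1$i - y2$i) = 0" by (simp add: algebra_simps)
    thus ?thesis using s_pos u by simp
  qed
  hence "y1 = y2" by (simp add: vec_eq_iff)
  thus False using ne by simp
qed

theorem theorem3:
  fixes A :: "real^'m^'l" and B :: "real^'m^'n" and y1 y2 b :: "real^'m"
  assumes "\<exists>y. A *v y = 0 \<and> pos_vec y"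
    and "aff_dim (coeff_polytope A) = 1"
    and "dim (mon_dep_space B) = 1"
    and "coeff_polytope_closure A = closed_segment y1 y2" and "y1 \<noteq> y2"
    and "mon_dep_space B = span {b}" and "b \<noteq> 0"
  shows "(\<forall>c. pos_vec c \<longrightarrow> sol_set A B c \<noteq> {}) \<longleftrightarrow>
         lumped_first b (qvec y1 y2) * lumped_last b (qvec y1 y2) < 0"
proof -
  let ?C = "coeff_polytope_closure A"
  have y1C: "y1 \<in> ?C" and y2C: "y2 \<in> ?C" using assms(4) by auto
  have nn1: "\<And>i. 0 \<le> y1$i" using y1C by (auto simp: coeff_polytope_closure_def)
  have nn2: "\<And>i. 0 \<le> y2$i" using y2C by (auto simp: coeff_polytope_closure_def)
  obtain z1 where z1: "y1$z1 = 0" using zero_entry[OF assms(4,5)] by blast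
  have C': "?C = closed_segment y2 y1" using assms(4) closed_segment_commute by metis
  obtain z2 where z2: "y2$z2 = 0" using zero_entry[OF C'] assms(5) by metis
  have "coeff_polytope A \<noteq> {}"
  proof
    assume "coeff_polytope A = {}"
    hence "aff_dim (coeff_polytope A) = -1" by simp
    thus False using assms(2) by simp
  qed
  then obtain yp where yp: "yp \<in> coeff_polytope A" by blast
  have PC: "\<And>y. y \<in> coeff_polytope A \<Longrightarrow> y \<in> ?C"
    by (auto simp: coeff_polytope_def coeff_polytope_closure_def less_imp_le)
  have "yp \<in> closed_segment y1 y2" using PC[OF yp] assms(4) by simp
  then obtain u where u: "0 \<le> u" "u \<le> 1" "yp = (1 - u) *\<^sub>R y1 + u *\<^sub>R y2"
    by (auto simp: closed_segment_def)
  have sumpos: "0 < y1$i + y2$i" for i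
  proof (rule ccontr)
    assume "\<not> 0 < y1$i + y2$i"
    hence "y1$i = 0" "y2$i = 0" using nn1[of i] nn2[of i] by auto
    hence "yp$i = 0" using u(3) by simp
    moreover have "0 < yp$i" using yp by (auto simp: coeff_polytope_def)
    ultimately show False by simp
  qed
  define q where "q = qvec y1 y2"
  have qi: "q$i = (y1$i - y2$i) / (y1$i + y2$i)" for i by (simp add: q_def qvec_def)
  have q_le: "q$i \<le> 1" for i using sumpos[of i] nn2[of i] by (simp add: qi field_simps)
  have q_ge: "-1 \<le> q$i" for i using sumpos[of i] nn1[of i] by (simp add: qi field_simps)
  have q_1: "q$i = 1 \<longleftrightarrow> y2$i = 0" for i using sumpos[of i] by (simp add: qi field_simps)
  have q_m1: "q$i = -1 \<longleftrightarrow> y1$i = 0" for i using sumpos[of i] by (simp add: qi field_simps)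
  have qz1: "q$z1 = -1" using q_m1 z1 by simp
  have qz2: "q$z2 = 1" using q_1 z2 by simp
  have r1: "-1 \<in> range (\<lambda>j. q$j)" by (metis qz1 rangeI)
  have r2: "1 \<in> range (\<lambda>j. q$j)" by (metis qz2 rangeI)
  have Mx: "Max (range (\<lambda>j. q$j)) = 1"
    by (rule Max_eqI) (use q_le r2 in auto)
  have Mn: "Min (range (\<lambda>j. q$j)) = -1"
    by (rule Min_eqI) (use q_ge r1 in auto)
  define Z1 where "Z1 = {i. y1$i = 0}"
  define Z2 where "Z2 = {i. y2$i = 0}"
  define L where "L = (\<Sum>i\<in>Z1. b$i)"
  define F where "F = (\<Sum>i\<in>Z2. b$i)"
  have lf: "lumped_first b q = F" unfolding lumped_first_def Mx F_def Z2_def q_1 ..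
  have ll: "lumped_last b q = L" unfolding lumped_last_def Mn L_def Z1_def q_m1 ..
  define g where "g y = (\<Sum>i\<in>UNIV. b$i * ln (y$i))" for y :: "real^'m"
  have vpow_exp: "vpow y z = exp (\<Sum>i\<in>UNIV. z$i * ln (y$i))" if "pos_vec y" for y z
    unfolding vpow_def exp_sum[OF finite]
    using that by (intro prod.cong) (auto simp: powr_def pos_vec_def less_imp_neq[symmetric] mult.commute)
  have solc: "(\<forall>z\<in>mon_dep_space B. vpow y z = vpow c z) \<longleftrightarrow> g y = g c"
    if "pos_vec c" "pos_vec y" for c y
  proof -
    have e: "vpow v (k *\<^sub>R b) = exp (k * g v)" if "pos_vec v" for v k
      using that by (simp add: vpow_exp g_def sum_distrib_left mult.assoc)
    show ?thesis
      unfolding assms(6) span_singleton using that by (auto simp: e dest: spec[of _ 1])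
  qed
  have Pchar: "y \<in> coeff_polytope A \<longleftrightarrow> (\<exists>t. 0 < t \<and> t < 1 \<and> y = (1 - t) *\<^sub>R y1 + t *\<^sub>R y2)" for y
  proof
    assume y: "y \<in> coeff_polytope A"
    hence ypos: "\<And>i. 0 < y$i" by (auto simp: coeff_polytope_def)
    have "y \<in> closed_segment y1 y2" using PC[OF y] assms(4) by simp
    then obtain t where t: "0 \<le> t" "t \<le> 1" "y = (1 - t) *\<^sub>R y1 + t *\<^sub>R y2"
      by (auto simp: closed_segment_def)
    have "t \<noteq> 0" using t(3) ypos[of z1] z1 by auto
    moreover have "t \<noteq> 1" using t(3) ypos[of z2] z2 by auto
    ultimately show "\<exists>t. 0 < t \<and> t < 1 \<and> y = (1 - t) *\<^sub>R y1 + t *\<^sub>R y2" using t by (intro exI[of _ t]) auto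
  next
    assume "\<exists>t. 0 < t \<and> t < 1 \<and> y = (1 - t) *\<^sub>R y1 + t *\<^sub>R y2"
    then obtain t where t: "0 < t" "t < 1" "y = (1 - t) *\<^sub>R y1 + t *\<^sub>R y2" by blast
    have "y \<in> closed_segment y1 y2" using t by (auto simp: closed_segment_def)
    hence "y \<in> ?C" using assms(4) by simp
    moreover have "0 < y$i" for i
      using pos_comb[OF nn1[of i] nn2[of i] sumpos[of i] t(1,2)] t(3) by simp
    ultimately show "y \<in> coeff_polytope A"
      by (auto simp: coeff_polytope_def coeff_polytope_closure_def)
  qed
  define K where "K t = (\<Sum>i\<in>UNIV. if i \<in> Z1 then b$i * ln (y2$i) else if i \<in> Z2 then b$i * ln (y1$i)
      else b$i * ln ((1 - t) * y1$i + t * y2$i))" for t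
  have hdec: "g ((1 - t) *\<^sub>R y1 + t *\<^sub>R y2) = L * ln t + F * ln (1 - t) + K t"
    if t: "0 < t" "t < 1" for t
  proof -
    have "g ((1 - t) *\<^sub>R y1 + t *\<^sub>R y2) = (\<Sum>i\<in>UNIV. (if i \<in> Z1 then b$i * ln t else 0)
       + (if i \<in> Z2 then b$i * ln (1 - t) else 0)
       + (if i \<in> Z1 then b$i * ln (y2$i) else if i \<in> Z2 then b$i * ln (y1$i)
      else b$i * ln ((1 - t) * y1$i + t * y2$i)))"
      unfolding g_def
    proof (rule sum.cong[OF refl])
      fix i
      show "b $ i * ln (((1 - t) *\<^sub>R y1 + t *\<^sub>R y2) $ i) = (if i \<in> Z1 then b$i * ln t else 0)
       + (if i \<in> Z2 then b$i * ln (1 - t) else 0)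
       + (if i \<in> Z1 then b$i * ln (y2$i) else if i \<in> Z2 then b$i * ln (y1$i)
      else b$i * ln ((1 - t) * y1$i + t * y2$i))"
      proof (cases "i \<in> Z1")
        case True
        hence "y1$i = 0" by (simp add: Z1_def)
        moreover hence "0 < y2$i" using sumpos[of i] by simp
        ultimately show ?thesis using t True by (simp add: Z2_def ln_mult distrib_left)
      next
        case False
        show ?thesis
        proof (cases "i \<in> Z2")
          case True
          hence "y2$i = 0" by (simp add: Z2_def)
          moreover hence "0 < y1$i" using sumpos[of i] by simp
          ultimately show ?thesis using t True False by (simp add: ln_mult distrib_left)
        qed (use False in simp)
      qed
    qed
    also have "\<dots> = (\<Sum>i\<in>UNIV. if i \<in> Z1 then b$i * ln t else 0)
       + (\<Sum>i\<in>UNIV. if i \<in> Z2 then b$i * ln (1 - t) else 0) + K t"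
      by (simp add: sum.distrib K_def)
    also have "\<dots> = L * ln t + F * ln (1 - t) + K t"
      by (simp add: sum.If_cases L_def F_def sum_distrib_right)
    finally show ?thesis .
  qed
  have Kcont: "continuous_on {0..1} K"
    unfolding K_def
  proof (intro continuous_on_sum)
    fix i
    show "continuous_on {0..1} (\<lambda>t. if i \<in> Z1 then b$i * ln (y2$i) else if i \<in> Z2 then b$i * ln (y1$i)
      else b$i * ln ((1 - t) * y1$i + t * y2$i))"
    proof (cases "i \<in> Z1 \<or> i \<in> Z2")
      case True thus ?thesis by (cases "i \<in> Z1") (simp_all add: continuous_on_const)
    next
      case False
      hence p: "0 < y1$i" "0 < y2$i" using nn1[of i] nn2[of i] by (auto simp: Z1_def Z2_def)
      have "continuous_on {0..1} (\<lambda>t. b$i * ln ((1 - t) * y1$i + t * y2$i))"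
        using pos_comb2[OF p] by (intro continuous_intros) (auto simp: less_imp_neq[symmetric])
      thus ?thesis using False by simp
    qed
  qed
  have grange: "\<exists>c. pos_vec c \<and> g c = r" for r
  proof -
    obtain j where j: "b$j \<noteq> 0" using assms(7) by (auto simp: vec_eq_iff)
    define c :: "real^'m" where "c = (\<chi> i. if i = j then exp (r / b$j) else 1)"
    have "pos_vec c" by (simp add: c_def pos_vec_def)
    moreover have "g c = (\<Sum>i\<in>UNIV. if i = j then r else 0)"
      unfolding g_def by (rule sum.cong) (use j in \<open>auto simp: c_def\<close>)
    ultimately show ?thesis by auto
  qed
  have "(\<forall>c. pos_vec c \<longrightarrow> sol_set A B c \<noteq> {}) \<longleftrightarrow>
        (\<forall>r. \<exists>t. 0 < t \<and> t < 1 \<and> L * ln t + F * ln (1 - t) + K t = r)"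
  proof
    assume H: "\<forall>c. pos_vec c \<longrightarrow> sol_set A B c \<noteq> {}"
    show "\<forall>r. \<exists>t. 0 < t \<and> t < 1 \<and> L * ln t + F * ln (1 - t) + K t = r"
    proof
      fix r
      obtain c where c: "pos_vec c" "g c = r" using grange by blast
      then obtain y where y: "y \<in> sol_set A B c" using H by blast
      hence yP: "y \<in> coeff_polytope A" and ys: "\<forall>z\<in>mon_dep_space B. vpow y z = vpow c z"
        by (auto simp: sol_set_def)
      have "pos_vec y" using yP by (simp add: coeff_polytope_def pos_vec_def)
      hence "g y = r" using solc[OF c(1)] ys c(2) by blast
      moreover obtain t where "0 < t" "t < 1" "y = (1 - t) *\<^sub>R y1 + t *\<^sub>R y2" using yP Pchar by blast
      ultimately show "\<exists>t. 0 < t \<and> t < 1 \<and> L * ln t + F * ln (1 - t) + K t = r"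
        using hdec by metis
    qed
  next
    assume H: "\<forall>r. \<exists>t. 0 < t \<and> t < 1 \<and> L * ln t + F * ln (1 - t) + K t = r"
    show "\<forall>c. pos_vec c \<longrightarrow> sol_set A B c \<noteq> {}"
    proof (intro allI impI)
      fix c :: "real^'m" assume c: "pos_vec c"
      obtain t where t: "0 < t" "t < 1" "L * ln t + F * ln (1 - t) + K t = g c" using H by blast
      define y where "y = (1 - t) *\<^sub>R y1 + t *\<^sub>R y2"
      have yP: "y \<in> coeff_polytope A" using Pchar t unfolding y_def by blast
      have "pos_vec y" using yP by (simp add: coeff_polytope_def pos_vec_def)
      moreover have "g y = g c" using hdec[OF t(1,2)] t(3) by (simp add: y_def)
      ultimately have "y \<in> sol_set A B c" using solc[OF c] yP by (simp add: sol_set_def)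
      thus "sol_set A B c \<noteq> {}" by blast
    qed
  qed
  also have "\<dots> \<longleftrightarrow> L * F < 0" by (rule surj_iff[OF Kcont])
  finally show ?thesis using lf ll by (simp add: q_def mult.commute)
qed

end
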